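(* Persistence equivalence and Forman equivalence of discrete Morse functions on graphs are independent: there exist a finite tree $T$ with $n$ simplices and discrete Morse functions $f,g\colon T\to[0,n]$ that are persistence equivalent but not Forman equivalent, and discrete Morse functions $f',g'\colon T\to[0,n]$ that are Forman equivalent but not persistence equivalent.
   Context: For a finite simple graph $G$, its simplices are its vertices and edges; write $v<e$ if vertex $v$ is an endpoint of edge $e$; $n$ is the total number of simplices. A discrete Morse function is a function $f$ from the simplices to $[0,n]$ such that: (i) $v<e$ implies $f(v)\le f(e)$; (ii) $\min f=0$; (iii) every value is attained by at most two simplices, and if $f(\sigma)=f(\tau)$ with $\sigma\neq\tau$ then one is an endpoint of the other; (iv) if a value $f(\sigma)$ is attained only by $\sigma$, then $f(\sigma)\in\mathbb{N}$; such $\sigma$ is critical, otherwise regular. The induced gradient vector field $V_f$ is the set of pairs $\{v<e\}$ with $f(v)=f(e)$ (the regular pairs). $f,g$ are Forman equivalent if $V_f=V_g$. With critical values $c_0<\dots<c_{m-1}$, the level subcomplexes $G_{c_i}=\{\sigma:f(\sigma)\le c_i\}$ form a filtration whose persistent homology (over a field) gives the persistence diagram $D_f$ (multiset of (birth value, death value) pairs, death $\infty$ for classes never dying); $f,g$ are persistence equivalent if $D_f=D_g$. *)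

theory Defs
  imports Main "HOL-Library.Function_Algebras" "HOL-Library.Extended_Real"
begin

text \<open>Its simplices are the vertices (as singletons) and the edges;
  the face relation v < e is proper inclusion.\<close>

definition simple_graph :: "'v set \<Rightarrow> 'v set set \<Rightarrow> bool" where
  "simple_graph V E \<longleftrightarrow> finite V \<and> (\<forall>e\<in>E. e \<subseteq> V \<and> card e = 2)"

definition simplices :: "'v set \<Rightarrow> 'v set set \<Rightarrow> 'v set set" where
  "simplices V E = (\<lambda>v. {v}) ` V \<union> E"

definition graph_connected :: "'v set \<Rightarrow> 'v set set \<Rightarrow> bool" where
  "graph_connected V E \<longleftrightarrow> V \<noteq> {} \<and>
     (\<forall>u\<in>V. \<forall>w\<in>V. (\<lambda>x y. {x, y} \<in> E)\<^sup>*\<^sup>* u w)"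

definition is_tree :: "'v set \<Rightarrow> 'v set set \<Rightarrow> bool" where
  "is_tree V E \<longleftrightarrow> simple_graph V E \<and> graph_connected V E \<and>
     (\<forall>e\<in>E. \<not> graph_connected V (E - {e}))"

definition critical :: "'v set \<Rightarrow> 'v set set \<Rightarrow> ('v set \<Rightarrow> real) \<Rightarrow> 'v set \<Rightarrow> bool" where
  "critical V E f \<sigma> \<longleftrightarrow> (\<forall>\<tau>\<in>simplices V E. f \<tau> = f \<sigma> \<longrightarrow> \<tau> = \<sigma>)"

definition dmf :: "'v set \<Rightarrow> 'v set set \<Rightarrow> ('v set \<Rightarrow> real) \<Rightarrow> bool" where
  "dmf V E f \<longleftrightarrow>
     (\<forall>\<sigma>\<in>simplices V E. 0 \<le> f \<sigma> \<and> f \<sigma> \<le> real (card (simplices V E))) \<and>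
     (\<forall>\<sigma>\<in>simplices V E. \<forall>\<tau>\<in>simplices V E. \<sigma> \<subset> \<tau> \<longrightarrow> f \<sigma> \<le> f \<tau>) \<and>
     (\<exists>\<sigma>\<in>simplices V E. f \<sigma> = 0) \<and>
     (\<forall>\<sigma>\<in>simplices V E. \<forall>\<tau>\<in>simplices V E. \<forall>\<rho>\<in>simplices V E.
        \<sigma> \<noteq> \<tau> \<and> \<sigma> \<noteq> \<rho> \<and> \<tau> \<noteq> \<rho> \<longrightarrow> \<not> (f \<sigma> = f \<tau> \<and> f \<tau> = f \<rho>)) \<and>
     (\<forall>\<sigma>\<in>simplices V E. \<forall>\<tau>\<in>simplices V E.
        \<sigma> \<noteq> \<tau> \<and> f \<sigma> = f \<tau> \<longrightarrow> \<sigma> \<subset> \<tau> \<or> \<tau> \<subset> \<sigma>) \<and>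
     (\<forall>\<sigma>\<in>simplices V E. critical V E f \<sigma> \<longrightarrow> f \<sigma> \<in> \<nat>)"

definition gradient_field :: "'v set \<Rightarrow> 'v set set \<Rightarrow> ('v set \<Rightarrow> real) \<Rightarrow> ('v set \<times> 'v set) set" where
  "gradient_field V E f =
     {(\<sigma>, \<tau>). \<sigma> \<in> simplices V E \<and> \<tau> \<in> simplices V E \<and> \<sigma> \<subset> \<tau> \<and> f \<sigma> = f \<tau>}"

definition forman_equiv :: "'v set \<Rightarrow> 'v set set \<Rightarrow> ('v set \<Rightarrow> real) \<Rightarrow> ('v set \<Rightarrow> real) \<Rightarrow> bool" where
  "forman_equiv V E f g \<longleftrightarrow> gradient_field V E f = gradient_field V E g"

definition crit_values :: "'v set \<Rightarrow> 'v set set \<Rightarrow> ('v set \<Rightarrow> real) \<Rightarrow> real set" where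
  "crit_values V E f = {f \<sigma> | \<sigma>. \<sigma> \<in> simplices V E \<and> critical V E f \<sigma>}"

definition ncrit :: "'v set \<Rightarrow> 'v set set \<Rightarrow> ('v set \<Rightarrow> real) \<Rightarrow> nat" where
  "ncrit V E f = card (crit_values V E f)"

definition cval :: "'v set \<Rightarrow> 'v set set \<Rightarrow> ('v set \<Rightarrow> real) \<Rightarrow> nat \<Rightarrow> real" where
  "cval V E f i = sorted_list_of_set (crit_values V E f) ! i"

definition level :: "'v set \<Rightarrow> 'v set set \<Rightarrow> ('v set \<Rightarrow> real) \<Rightarrow> nat \<Rightarrow> 'v set set" where
  "level V E f i = {\<sigma> \<in> simplices V E. f \<sigma> \<le> cval V E f i}"

definition chains :: "'k itself \<Rightarrow> 'v set set \<Rightarrow> nat \<Rightarrow> ('v set \<Rightarrow> 'k::field) set" where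
  "chains _ K p = {c. \<forall>\<sigma>. c \<sigma> \<noteq> 0 \<longrightarrow> \<sigma> \<in> K \<and> card \<sigma> = Suc p}"

text \<open>Incidence number [tau : sigma] for an oriented simplex (vertices ordered by the
  linear order on 'v): (-1)^(position of the removed vertex).\<close>
definition incidence :: "'v::linorder set \<Rightarrow> 'v set \<Rightarrow> 'k::field" where
  "incidence \<sigma> \<tau> = (-1) ^ card {x \<in> \<tau>. x < the_elem (\<tau> - \<sigma>)}"

text \<open>Simplicial boundary operator of the complex S (non-augmented).\<close>
definition bd :: "'v::linorder set set \<Rightarrow> ('v set \<Rightarrow> 'k::field) \<Rightarrow> 'v set \<Rightarrow> 'k" where
  "bd S c \<sigma> = (if \<sigma> \<in> S then
      (\<Sum>\<tau>\<in>S. if \<sigma> \<subset> \<tau> \<and> card \<tau> = Suc (card \<sigma>) then incidence \<sigma> \<tau> * c \<tau> else 0)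
    else 0)"

definition cycles :: "'k::field itself \<Rightarrow> 'v::linorder set set \<Rightarrow> 'v set set \<Rightarrow> nat \<Rightarrow> ('v set \<Rightarrow> 'k) set" where
  "cycles k S K p = {c \<in> chains k K p. bd S c = 0}"

definition boundaries :: "'k::field itself \<Rightarrow> 'v::linorder set set \<Rightarrow> 'v set set \<Rightarrow> nat \<Rightarrow> ('v set \<Rightarrow> 'k) set" where
  "boundaries k S K p = bd S ` chains k K (Suc p)"

definition kdim :: "'k::field itself \<Rightarrow> ('v set \<Rightarrow> 'k) set \<Rightarrow> nat" where
  "kdim _ W = vector_space.dim (\<lambda>(a::'k) (c::'v set \<Rightarrow> 'k) x. a * c x) W"

text \<open>Persistent Betti number beta_p^{i,j} = dim Z_p(K_i) / (Z_p(K_i) \<inter> B_p(K_j)),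
  the rank of H_p(K_i) -> H_p(K_j).\<close>
definition pbetti :: "'k::field itself \<Rightarrow> 'v::linorder set \<Rightarrow> 'v set set \<Rightarrow> ('v set \<Rightarrow> real)
    \<Rightarrow> nat \<Rightarrow> nat \<Rightarrow> nat \<Rightarrow> int" where
  "pbetti k V E f p i j =
     int (kdim k (cycles k (simplices V E) (level V E f i) p))
   - int (kdim k (cycles k (simplices V E) (level V E f i) p
                  \<inter> boundaries k (simplices V E) (level V E f j) p))"

text \<open>Convention K_{-1} = empty: beta^{i-1,j} = 0 for i = 0.\<close>
definition pbetti_prev :: "'k::field itself \<Rightarrow> 'v::linorder set \<Rightarrow> 'v set set \<Rightarrow> ('v set \<Rightarrow> real)
    \<Rightarrow> nat \<Rightarrow> nat \<Rightarrow> nat \<Rightarrow> int" where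
  "pbetti_prev k V E f p i j = (if i = 0 then 0 else pbetti k V E f p (i - 1) j)"

definition pmult :: "'k::field itself \<Rightarrow> 'v::linorder set \<Rightarrow> 'v set set \<Rightarrow> ('v set \<Rightarrow> real)
    \<Rightarrow> nat \<Rightarrow> nat \<Rightarrow> nat \<Rightarrow> int" where
  "pmult k V E f p i j =
     (pbetti k V E f p i (j - 1) - pbetti k V E f p i j)
   - (pbetti_prev k V E f p i (j - 1) - pbetti_prev k V E f p i j)"

definition pmult_inf :: "'k::field itself \<Rightarrow> 'v::linorder set \<Rightarrow> 'v set set \<Rightarrow> ('v set \<Rightarrow> real)
    \<Rightarrow> nat \<Rightarrow> nat \<Rightarrow> int" where
  "pmult_inf k V E f p i =
     pbetti k V E f p i (ncrit V E f - 1) - pbetti_prev k V E f p i (ncrit V E f - 1)"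

text \<open>The p-dimensional persistence diagram, as a multiplicity function on
  (birth value, death value) pairs; death value \<infinity> for essential classes.\<close>
definition pers_diagram :: "'k::field itself \<Rightarrow> 'v::linorder set \<Rightarrow> 'v set set \<Rightarrow> ('v set \<Rightarrow> real)
    \<Rightarrow> nat \<Rightarrow> real \<times> ereal \<Rightarrow> int" where
  "pers_diagram k V E f p = (\<lambda>(b, d).
      (\<Sum>i<ncrit V E f. \<Sum>j\<in>{i<..<ncrit V E f}.
          if b = cval V E f i \<and> d = ereal (cval V E f j) then pmult k V E f p i j else 0)
    + (\<Sum>i<ncrit V E f. if b = cval V E f i \<and> d = \<infinity> then pmult_inf k V E f p i else 0))"

definition persistence_equiv :: "'k::field itself \<Rightarrow> 'v::linorder set \<Rightarrow> 'v set set
    \<Rightarrow> ('v set \<Rightarrow> real) \<Rightarrow> ('v set \<Rightarrow> real) \<Rightarrow> bool" where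
  "persistence_equiv k V E f g \<longleftrightarrow> (\<forall>p. pers_diagram k V E f p = pers_diagram k V E g p)"

end

theory Submission imports Defs begin

lemma vs: "vector_space (\<lambda>(a::'k::field) (c::'v set \<Rightarrow> 'k) x. a * c x)"
  by unfold_locales (auto simp: fun_eq_iff algebra_simps)

interpretation fv: vector_space "(\<lambda>(a::'k::field) (c::'v set \<Rightarrow> 'k) x. a * c x)"
  by (rule vs)

definition S0 :: "nat set set" where "S0 = {{2},{3},{4},{2,3},{3,4}}"

lemma S0: "simplices {2,3,4} {{2,3},{3,4}} = S0"
  unfolding simplices_def S0_def by auto

lemma S0_distinct: "{2::nat} \<noteq> {3}" "{2::nat} \<noteq> {4}" "{3::nat} \<noteq> {4}"
  "{2::nat,3} \<noteq> {3,4}" "{2::nat} \<noteq> {2,3}" "{2::nat} \<noteq> {3,4}"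
  "{3::nat} \<noteq> {2,3}" "{3::nat} \<noteq> {3,4}" "{4::nat} \<noteq> {2,3}" "{4::nat} \<noteq> {3,4}"
  by (auto simp: doubleton_eq_iff)

lemma sum_S0: "sum F S0 = F {2} + F {3} + F {4} + F {2,3} + F {3,4}"
proof -
  have "S0 = insert {2} (insert {3} (insert {4} (insert {2,3} {{3,4}})))" by (simp add: S0_def)
  have "{2::nat} \<notin> insert {3} (insert {4} (insert {2,3} {{3,4}}))"
    "{3::nat} \<notin> (insert {4} (insert {2,3} {{3,4}}))"
    "{4::nat} \<notin> insert {2,3} {{3,4}}" "{2::nat,3} \<notin> {{3,4}}"
    by (auto simp: doubleton_eq_iff)
    note nm = this
  have "sum F S0 = F {2} + (F {3} + (F {4} + (F {2,3} + F {3,4})))"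
    unfolding S0_def
    apply (subst sum.insert[OF _ nm(1)], simp)
    apply (subst sum.insert[OF _ nm(2)], simp)
    apply (subst sum.insert[OF _ nm(3)], simp)
    apply (subst sum.insert[OF _ nm(4)], simp)
    apply simp done
  then show ?thesis by (simp add: add.assoc)
qed

lemma inc1: "incidence {2::nat} {2,3} = (-1::'k::field)"
  "incidence {3::nat} {2,3} = (1::'k::field)"
  "incidence {3::nat} {3,4} = (-1::'k::field)"
  "incidence {4::nat} {3,4} = (1::'k::field)"
proof -
  have "{x\<in>{2::nat,3}. x < the_elem ({2,3} - {2})} = {2}" by (auto simp: insert_Diff_if)
  note e = this show "incidence {2::nat} {2,3} = (-1::'k::field)" unfolding incidence_def e by simp
  have "{x\<in>{2::nat,3}. x < the_elem ({2,3} - {3})} = {}" by (auto simp: insert_Diff_if)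
  note e = this show "incidence {3::nat} {2,3} = (1::'k::field)" unfolding incidence_def e by simp
  have "{x\<in>{3::nat,4}. x < the_elem ({3,4} - {3})} = {3}" by (auto simp: insert_Diff_if)
  note e = this show "incidence {3::nat} {3,4} = (-1::'k::field)" unfolding incidence_def e by simp
  have "{x\<in>{3::nat,4}. x < the_elem ({3,4} - {4})} = {}" by (auto simp: insert_Diff_if)
  note e = this show "incidence {4::nat} {3,4} = (1::'k::field)" unfolding incidence_def e by simp
qed

lemma subs: "{2::nat} \<subset> {2,3}" "{3::nat} \<subset> {2,3}" "{3::nat} \<subset> {3,4}" "{4::nat} \<subset> {3,4}"
  "\<not> {2::nat} \<subset> {3,4}" "\<not> {4::nat} \<subset> {2,3}" "\<not> {2::nat} \<subset> {2}"  "\<not> {3::nat} \<subset> {3}" "\<not> {4::nat} \<subset> {4}"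
  "\<not> {2::nat} \<subset> {3}" "\<not> {2::nat} \<subset> {4}" "\<not> {3::nat} \<subset> {2}" "\<not> {3::nat} \<subset> {4}" "\<not> {4::nat} \<subset> {2}" "\<not> {4::nat} \<subset> {3}"
  by (simp_all add: psubset_eq)

lemma cards: "card {2::nat,3} = 2" "card {3::nat,4} = 2" by simp_all

lemma bdS0_vals:
  fixes c :: "nat set \<Rightarrow> 'k::field"
  shows "bd S0 c {2} = - c {2,3}" "bd S0 c {3} = c {2,3} - c {3,4}" "bd S0 c {4} = c {3,4}"
proof -
  have m: "{2::nat} \<in> S0" "{3::nat} \<in> S0" "{4::nat} \<in> S0" by (auto simp: S0_def)
  show "bd S0 c {2} = - c {2,3}" unfolding bd_def sum_S0 using m by (simp add: inc1 subs cards)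
  show "bd S0 c {3} = c {2,3} - c {3,4}" unfolding bd_def sum_S0 using m by (simp add: inc1 subs cards)
  show "bd S0 c {4} = c {3,4}" unfolding bd_def sum_S0 using m by (simp add: inc1 subs cards)
qed


lemma S0_distinct2: "{3::nat} \<noteq> {2}" "{4::nat} \<noteq> {2}" "{4::nat} \<noteq> {3}"
  "{3::nat,4} \<noteq> {2,3}" "{2::nat,3} \<noteq> {2}" "{3::nat,4} \<noteq> {2}"
  "{2::nat,3} \<noteq> {3}" "{3::nat,4} \<noteq> {3}" "{2::nat,3} \<noteq> {4}" "{3::nat,4} \<noteq> {4}"
  by (auto simp: doubleton_eq_iff)

lemmas Sneq = S0_distinct S0_distinct2

lemma card_S0: "card S0 = 5"
  using sum_S0[of "\<lambda>_. 1::nat"] by simp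

definition fp :: "nat set \<Rightarrow> real" where
  "fp \<sigma> = (if \<sigma> = {2} then 0 else if \<sigma> = {3} \<or> \<sigma> = {2,3} then 1/2 else if \<sigma> = {4} then 1 else 2)"
definition gp :: "nat set \<Rightarrow> real" where
  "gp \<sigma> = (if \<sigma> = {2} then 0 else if \<sigma> = {3} \<or> \<sigma> = {2,3} then 1/2 else if \<sigma> = {4} then 1 else 3)"

lemma psub_all: "\<not> {2::nat,3} \<subset> {2}" "\<not> {2::nat,3} \<subset> {3}" "\<not> {2::nat,3} \<subset> {4}" "\<not> {2::nat,3} \<subset> {2,3}" "\<not> {2::nat,3} \<subset> {3,4}"
  "\<not> {3::nat,4} \<subset> {2}" "\<not> {3::nat,4} \<subset> {3}" "\<not> {3::nat,4} \<subset> {4}" "\<not> {3::nat,4} \<subset> {2,3}" "\<not> {3::nat,4} \<subset> {3,4}"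
  by (simp_all add: psubset_eq doubleton_eq_iff)

lemmas setfacts = Sneq subs psub_all

lemma dmf_fp: "dmf {2,3,4} {{2,3},{3,4}} fp"
  unfolding dmf_def S0 card_S0 critical_def
  by (simp add: S0_def setfacts fp_def)

lemma dmf_gp: "dmf {2,3,4} {{2,3},{3,4}} gp"
  unfolding dmf_def S0 card_S0 critical_def
  by (simp add: S0_def setfacts gp_def)


lemma filt_insert: "{x \<in> insert a A. P x} = (if P a then insert a {x \<in> A. P x} else {x \<in> A. P x})"
  by auto

lemma cv_eq: "crit_values V E f = f ` {\<sigma> \<in> simplices V E. critical V E f \<sigma>}"
  unfolding crit_values_def by auto

lemma crit_fp_set: "{\<sigma> \<in> simplices {2,3,4} {{2,3},{3,4}}. critical {2,3,4} {{2,3},{3,4}} fp \<sigma>} = {{2},{4},{3,4}}"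
proof -
  have c: "critical {2,3,4} {{2,3},{3,4}} fp {2}" "\<not> critical {2,3,4} {{2,3},{3,4}} fp {3}"
    "critical {2,3,4} {{2,3},{3,4}} fp {4}" "\<not> critical {2,3,4} {{2,3},{3,4}} fp {2,3}"
    "critical {2,3,4} {{2,3},{3,4}} fp {3,4}"
    unfolding critical_def S0 by (simp_all add: S0_def setfacts fp_def)
  show ?thesis unfolding S0 unfolding S0_def filt_insert by (simp add: c setfacts insert_commute)
qed

lemma crit_gp_set: "{\<sigma> \<in> simplices {2,3,4} {{2,3},{3,4}}. critical {2,3,4} {{2,3},{3,4}} gp \<sigma>} = {{2},{4},{3,4}}"
proof -
  have c: "critical {2,3,4} {{2,3},{3,4}} gp {2}" "\<not> critical {2,3,4} {{2,3},{3,4}} gp {3}"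
    "critical {2,3,4} {{2,3},{3,4}} gp {4}" "\<not> critical {2,3,4} {{2,3},{3,4}} gp {2,3}"
    "critical {2,3,4} {{2,3},{3,4}} gp {3,4}"
    unfolding critical_def S0 by (simp_all add: S0_def setfacts gp_def)
  show ?thesis unfolding S0 unfolding S0_def filt_insert by (simp add: c setfacts insert_commute)
qed

lemma crit_fp: "crit_values {2,3,4} {{2,3},{3,4}} fp = {0,1,2}"
  unfolding cv_eq crit_fp_set by (simp add: fp_def setfacts insert_commute)

lemma crit_gp: "crit_values {2,3,4} {{2,3},{3,4}} gp = {0,1,3}"
  unfolding cv_eq crit_gp_set by (simp add: gp_def setfacts insert_commute)

lemma sl012: "sorted_list_of_set {0::real,1,2} = [0,1,2]"
  by (subst sorted_list_of_set_unique[symmetric]) simp_all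
lemma sl013: "sorted_list_of_set {0::real,1,3} = [0,1,3]"
  by (subst sorted_list_of_set_unique[symmetric]) simp_all


lemma fg_agree: "\<forall>\<sigma>\<in>S0. \<forall>\<tau>\<in>S0. \<sigma> \<subset> \<tau> \<longrightarrow> (fp \<sigma> = fp \<tau> \<longleftrightarrow> gp \<sigma> = gp \<tau>)"
  by (simp add: S0_def setfacts fp_def gp_def)

lemma forman_fpgp: "forman_equiv {2,3,4} {{2,3},{3,4}} fp gp"
  unfolding forman_equiv_def gradient_field_def S0
  using fg_agree by blast


definition ua :: "nat set \<Rightarrow> 'k::field" where
  "ua \<sigma> = (if \<sigma> = {2} then -1 else if \<sigma> = {3} then 1 else 0)"
definition ub :: "nat set \<Rightarrow> 'k::field" where
  "ub \<sigma> = (if \<sigma> = {3} then -1 else if \<sigma> = {4} then 1 else 0)"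

lemma bd_edges:
  fixes c :: "nat set \<Rightarrow> 'k::field"
  shows "bd S0 c {2,3} = 0" "bd S0 c {3,4} = 0"
  unfolding bd_def sum_S0 by (simp_all add: setfacts cards)

lemma bd_notin: "\<sigma> \<notin> S0 \<Longrightarrow> bd S0 c \<sigma> = 0"
  unfolding bd_def by simp

lemma bdS0: "bd S0 (c :: nat set \<Rightarrow> 'k::field) = (\<lambda>\<sigma>. c {2,3} * ua \<sigma> + c {3,4} * ub \<sigma>)"
proof
  fix \<sigma>
  show "bd S0 c \<sigma> = c {2,3} * ua \<sigma> + c {3,4} * ub \<sigma>"
  proof (cases "\<sigma> \<in> S0")
    case True
    then have "\<sigma> = {2} \<or> \<sigma> = {3} \<or> \<sigma> = {4} \<or> \<sigma> = {2,3} \<or> \<sigma> = {3,4}" by (simp add: S0_def)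
    then show ?thesis
      by (elim disjE) (simp_all add: bdS0_vals bd_edges ua_def ub_def setfacts)
  next
    case False
    then have "\<sigma> \<noteq> {2}" "\<sigma> \<noteq> {3}" "\<sigma> \<noteq> {4}" by (auto simp: S0_def)
    with False show ?thesis by (simp add: bd_notin ua_def ub_def)
  qed
qed

definition K1 :: "nat set set" where "K1 = {{2},{3},{4},{2,3}}"

lemma span1: "fv.span {ua} = range (\<lambda>k. (\<lambda>x. k * (ua :: nat set \<Rightarrow> 'k::field) x))"
  by (rule fv.span_singleton)

lemma span2: "fv.span {ua, ub} = {x. \<exists>k m. x = (\<lambda>\<sigma>. k * (ua :: nat set \<Rightarrow> 'k::field) \<sigma> + m * ub \<sigma>)}"
proof (intro set_eqI iffI)
  fix x :: "nat set \<Rightarrow> 'k"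
  assume "x \<in> fv.span {ua, ub}"
  then obtain k m where e: "x - (\<lambda>y. k * ua y) = (\<lambda>y. m * ub y)"
    unfolding fv.span_insert[of ua "{ub}"] fv.span_singleton by blast
  have "\<forall>y. x y = k * ua y + m * ub y"
  proof
    fix y
    have "x y - k * ua y = m * ub y" using fun_cong[OF e, of y] by (simp add: fun_diff_def)
    then show "x y = k * ua y + m * ub y" by (simp add: diff_eq_eq add.commute)
  qed
  then show "x \<in> {x. \<exists>k m. x = (\<lambda>\<sigma>. k * (ua :: nat set \<Rightarrow> 'k::field) \<sigma> + m * ub \<sigma>)}"
    by (auto simp: fun_eq_iff)
next
  fix x :: "nat set \<Rightarrow> 'k"
  assume "x \<in> {x. \<exists>k m. x = (\<lambda>\<sigma>. k * (ua :: nat set \<Rightarrow> 'k::field) \<sigma> + m * ub \<sigma>)}"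
  then obtain k m where e: "x = (\<lambda>\<sigma>. k * (ua :: nat set \<Rightarrow> 'k::field) \<sigma> + m * ub \<sigma>)" by blast
  have "x - (\<lambda>y. k * ua y) = (\<lambda>y. m * ub y)" unfolding e by (simp add: fun_diff_def)
  then show "x \<in> fv.span {ua, ub}"
    unfolding fv.span_insert[of ua "{ub}"] fv.span_singleton by blast
qed

lemma B1: "boundaries TYPE('k::field) S0 K1 0 = fv.span {ua :: nat set \<Rightarrow> 'k}"
proof -
  have "bd S0 ` chains TYPE('k) K1 (Suc 0) = range (\<lambda>k. (\<lambda>x. k * (ua :: nat set \<Rightarrow> 'k) x))"
  proof (intro set_eqI iffI)
    fix x assume "x \<in> bd S0 ` chains TYPE('k) K1 (Suc 0)"
    then obtain c where c: "c \<in> chains TYPE('k) K1 (Suc 0)" and x: "x = bd S0 c" by blast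
    have "c {3,4} = 0"
    proof (rule ccontr)
      assume "c {3,4} \<noteq> 0"
      with c have "{3::nat,4} \<in> K1" unfolding chains_def by blast
      then show False by (simp add: K1_def setfacts)
    qed
    then have "x = (\<lambda>y. c {2,3} * ua y)" using x by (simp add: bdS0)
    then show "x \<in> range (\<lambda>k. (\<lambda>x. k * ua x))" by blast
  next
    fix x :: "nat set \<Rightarrow> 'k" assume "x \<in> range (\<lambda>k. (\<lambda>x. k * ua x))"
    then obtain k where x: "x = (\<lambda>y. k * ua y)" by blast
    define c :: "nat set \<Rightarrow> 'k" where "c = (\<lambda>\<sigma>. if \<sigma> = {2,3} then k else 0)"
    have "c \<in> chains TYPE('k) K1 (Suc 0)" unfolding chains_def c_def by (simp add: K1_def cards)
    moreover have "bd S0 c = x" unfolding bdS0 x c_def by (simp add: setfacts)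
    ultimately show "x \<in> bd S0 ` chains TYPE('k) K1 (Suc 0)" by blast
  qed
  then show ?thesis unfolding boundaries_def span1 by simp
qed

lemma B2: "boundaries TYPE('k::field) S0 S0 0 = fv.span {ua :: nat set \<Rightarrow> 'k, ub}"
proof -
  have "bd S0 ` chains TYPE('k) S0 (Suc 0) = {x. \<exists>k m. x = (\<lambda>\<sigma>. k * (ua :: nat set \<Rightarrow> 'k) \<sigma> + m * ub \<sigma>)}"
  proof (intro set_eqI iffI)
    fix x assume "x \<in> bd S0 ` chains TYPE('k) S0 (Suc 0)"
    then obtain c where x: "x = bd S0 c" by blast
    then show "x \<in> {x. \<exists>k m. x = (\<lambda>\<sigma>. k * (ua :: nat set \<Rightarrow> 'k) \<sigma> + m * ub \<sigma>)}" by (auto simp add: bdS0)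
  next
    fix x :: "nat set \<Rightarrow> 'k" assume "x \<in> {x. \<exists>k m. x = (\<lambda>\<sigma>. k * (ua :: nat set \<Rightarrow> 'k) \<sigma> + m * ub \<sigma>)}"
    then obtain k m where x: "x = (\<lambda>\<sigma>. k * (ua :: nat set \<Rightarrow> 'k) \<sigma> + m * ub \<sigma>)" by blast
    define c :: "nat set \<Rightarrow> 'k" where "c = (\<lambda>\<sigma>. if \<sigma> = {2,3} then k else if \<sigma> = {3,4} then m else 0)"
    have "c \<in> chains TYPE('k) S0 (Suc 0)" unfolding chains_def c_def by (simp add: S0_def cards)
    moreover have "bd S0 c = x" unfolding bdS0 x c_def by (simp add: setfacts)
    ultimately show "x \<in> bd S0 ` chains TYPE('k) S0 (Suc 0)" by blast
  qed
  then show ?thesis unfolding boundaries_def span2 by simp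
qed

lemma indep1: "fv.independent {ua :: nat set \<Rightarrow> 'k::field}"
proof -
  have "ua \<noteq> (0 :: nat set \<Rightarrow> 'k)"
  proof
    assume "ua = (0 :: nat set \<Rightarrow> 'k)"
    then have "(ua :: nat set \<Rightarrow> 'k) {2} = 0" by simp
    then show False by (simp add: ua_def)
  qed
  then show ?thesis by (intro fv.independent_insertI) (simp_all add: fv.independent_empty)
qed

lemma indep2: "fv.independent {ua :: nat set \<Rightarrow> 'k::field, ub}"
proof -
  have "ub \<noteq> (0 :: nat set \<Rightarrow> 'k)"
  proof
    assume "ub = (0 :: nat set \<Rightarrow> 'k)"
    then have "(ub :: nat set \<Rightarrow> 'k) {4} = 0" by simp
    then show False by (simp add: ub_def setfacts)
  qed
  then have i: "fv.independent {ub :: nat set \<Rightarrow> 'k}" by (intro fv.independent_insertI) (simp_all add: fv.independent_empty)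
  have "ua \<notin> fv.span {ub :: nat set \<Rightarrow> 'k}"
  proof
    assume "ua \<in> fv.span {ub :: nat set \<Rightarrow> 'k}"
    then obtain k where "ua = (\<lambda>x. k * (ub :: nat set \<Rightarrow> 'k) x)" unfolding fv.span_singleton by blast
    then have "(ua :: nat set \<Rightarrow> 'k) {2} = k * (ub :: nat set \<Rightarrow> 'k) {2}" by metis
    then show False by (simp add: ua_def ub_def setfacts)
  qed
  then show ?thesis using i by (rule fv.independent_insertI)
qed

lemma dimB1: "fv.dim (fv.span {ua :: nat set \<Rightarrow> 'k::field}) = 1"
proof -
  have "fv.dim (fv.span {ua :: nat set \<Rightarrow> 'k}) = card {ua :: nat set \<Rightarrow> 'k}"
    by (rule fv.dim_span_eq_card_independent[OF indep1])
  also have "\<dots> = 1" by simp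
  finally show ?thesis .
qed

lemma dimB2: "fv.dim (fv.span {ua :: nat set \<Rightarrow> 'k::field, ub}) = 2"
proof -
  have "ua \<noteq> (ub :: nat set \<Rightarrow> 'k)"
  proof
    assume "ua = (ub :: nat set \<Rightarrow> 'k)"
    then have "(ua :: nat set \<Rightarrow> 'k) {2} = ub {2}" by simp
    then show False by (simp add: ua_def ub_def setfacts)
  qed
  then have c: "card {ua :: nat set \<Rightarrow> 'k, ub} = 2" by simp
  have "fv.dim (fv.span {ua :: nat set \<Rightarrow> 'k, ub}) = card {ua :: nat set \<Rightarrow> 'k, ub}"
    by (rule fv.dim_span_eq_card_independent[OF indep2])
  also have "\<dots> = 2" by (rule c)
  finally show ?thesis .
qed


lemma span2_cycles: "fv.span {ua, ub} \<subseteq> cycles TYPE('k::field) S0 K1 0"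
proof
  fix x :: "nat set \<Rightarrow> 'k" assume "x \<in> fv.span {ua, ub}"
  then obtain k m where e: "x = (\<lambda>\<sigma>. k * (ua :: nat set \<Rightarrow> 'k) \<sigma> + m * ub \<sigma>)" unfolding span2 by blast
  have "x \<in> chains TYPE('k) K1 0"
    unfolding chains_def e by (auto simp: ua_def ub_def K1_def split: if_splits)
  moreover have "bd S0 x = 0" unfolding bdS0 e by (simp add: ua_def ub_def setfacts zero_fun_def)
  ultimately show "x \<in> cycles TYPE('k) S0 K1 0" unfolding cycles_def by blast
qed

lemma K0_cycles_span: "cycles TYPE('k::field) S0 {{2}} 0 \<inter> fv.span {ua, ub} \<subseteq> {0}"
proof
  fix x :: "nat set \<Rightarrow> 'k" assume x: "x \<in> cycles TYPE('k::field) S0 {{2}} 0 \<inter> fv.span {ua, ub}"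
  then obtain k m where e: "x = (\<lambda>\<sigma>. k * (ua :: nat set \<Rightarrow> 'k) \<sigma> + m * ub \<sigma>)" unfolding span2 by blast
  have ch: "x \<sigma> = 0" if "\<sigma> \<noteq> {2}" for \<sigma>
    using x that unfolding cycles_def chains_def by auto
  have "x {4} = 0" by (rule ch) (simp add: setfacts)
  then have m0: "m = 0" unfolding e by (simp add: ua_def ub_def setfacts)
  have "x {3} = 0" by (rule ch) (simp add: setfacts)
  then have k0: "k = 0" unfolding e m0 by (simp add: ua_def ub_def setfacts)
  show "x \<in> {0}" unfolding e k0 m0 by (simp add: zero_fun_def)
qed

lemma dim0: "W \<subseteq> {0} \<Longrightarrow> fv.dim (W :: (nat set \<Rightarrow> 'k::field) set) = 0"
  using fv.dim_le_card[of W "{}"] by (simp add: fv.span_empty)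


abbreviation "VV \<equiv> {2::nat,3,4}"
abbreviation "EE \<equiv> {{2::nat,3},{3,4}}"

lemma cval_fp: "cval VV EE fp 0 = 0" "cval VV EE fp 1 = 1" "cval VV EE fp 2 = 2"
  by (simp_all add: cval_def crit_fp sl012)
lemma cval_gp: "cval VV EE gp 0 = 0" "cval VV EE gp 1 = 1" "cval VV EE gp 2 = 3"
  by (simp_all add: cval_def crit_gp sl013)
lemma ncrit_fp: "ncrit VV EE fp = 3" by (simp add: ncrit_def crit_fp)
lemma ncrit_gp: "ncrit VV EE gp = 3" by (simp add: ncrit_def crit_gp)

lemma level_fp: "level VV EE fp 0 = {{2}}" "level VV EE fp 1 = K1" "level VV EE fp 2 = S0"
  unfolding level_def cval_fp S0 unfolding S0_def filt_insert
  by (simp_all add: fp_def setfacts K1_def insert_commute)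

lemma level_fp1: "level VV EE fp (Suc 0) = K1" using level_fp(2) by simp

lemma kd: "kdim TYPE('k::field) W = fv.dim (W :: (nat set \<Rightarrow> 'k) set)"
  unfolding kdim_def ..

lemma pmult_fp: "pmult TYPE('k::field) VV EE fp 0 1 2 = 1"
proof -
  have B1s: "boundaries TYPE('k) S0 K1 0 \<subseteq> fv.span {ua, ub}"
    unfolding B1 by (rule fv.span_mono) auto
  have B2s: "boundaries TYPE('k) S0 S0 0 \<subseteq> fv.span {ua, ub}"
    unfolding B2 by simp
  have d11: "kdim TYPE('k) (cycles TYPE('k) S0 K1 0 \<inter> boundaries TYPE('k) S0 K1 0) = 1"
  proof -
    have "cycles TYPE('k) S0 K1 0 \<inter> boundaries TYPE('k) S0 K1 0 = boundaries TYPE('k) S0 K1 0"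
      using B1s span2_cycles by blast
    then show ?thesis unfolding kd B1 by (simp only: dimB1)
  qed
  have d12: "kdim TYPE('k) (cycles TYPE('k) S0 K1 0 \<inter> boundaries TYPE('k) S0 S0 0) = 2"
  proof -
    have "cycles TYPE('k) S0 K1 0 \<inter> boundaries TYPE('k) S0 S0 0 = boundaries TYPE('k) S0 S0 0"
      using B2s span2_cycles by blast
    then show ?thesis unfolding kd B2 by (simp only: dimB2)
  qed
  have d01: "kdim TYPE('k) (cycles TYPE('k) S0 {{2}} 0 \<inter> boundaries TYPE('k) S0 K1 0) = 0"
    unfolding kd by (rule dim0) (use B1s K0_cycles_span in blast)
  have d02: "kdim TYPE('k) (cycles TYPE('k) S0 {{2}} 0 \<inter> boundaries TYPE('k) S0 S0 0) = 0"
    unfolding kd by (rule dim0) (use B2s K0_cycles_span in blast)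
  show ?thesis
    unfolding pmult_def pbetti_prev_def pbetti_def S0
    by (simp add: level_fp level_fp1 d11 d12 d01 d02)
qed



lemma lt3: "{..<3::nat} = {0,1,2}" "{0<..<3::nat} = {1,2}" "{1<..<3::nat} = {2}" "{2<..<3::nat} = {}" "{Suc 0<..<3::nat} = {2}"
  by auto

lemma sucfacts: "cval VV EE fp (Suc 0) = 1" "cval VV EE gp (Suc 0) = 1"
  "pmult TYPE('k::field) VV EE fp 0 (Suc 0) 2 = 1"
  using cval_fp(2) cval_gp(2) pmult_fp by simp_all

lemma pd_fp: "pers_diagram TYPE('k::field) VV EE fp 0 (1, ereal 2) = 1"
  unfolding pers_diagram_def ncrit_fp lt3
  by (simp add: cval_fp pmult_fp lt3 sucfacts)

lemma pd_gp: "pers_diagram TYPE('k::field) VV EE gp 0 (1, ereal 2) = 0"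
  unfolding pers_diagram_def ncrit_gp lt3
  by (simp add: cval_gp lt3 sucfacts)

lemma not_pers_fpgp: "\<not> persistence_equiv TYPE('k::field) VV EE fp gp"
  unfolding persistence_equiv_def using pd_fp pd_gp by (metis zero_neq_one)



lemma pers_cong:
  assumes cv: "crit_values V E f = crit_values V E g"
    and lv: "\<forall>i<ncrit V E f. level V E f i = level V E g i"
  shows "pers_diagram k V E f p = pers_diagram k V E g p"
proof -
  have n: "ncrit V E g = ncrit V E f" unfolding ncrit_def cv ..
  have c: "cval V E g = cval V E f" unfolding cval_def[abs_def] cv ..
  define n0 where "n0 = ncrit V E f"
  have pb: "pbetti k V E f p i j = pbetti k V E g p i j" if "i < n0" "j < n0" for i j
    unfolding pbetti_def using lv that n0_def by simp
  have pbp: "pbetti_prev k V E f p i j = pbetti_prev k V E g p i j" if "i < n0" "j < n0" for i j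
    unfolding pbetti_prev_def using pb[of "i - 1" j] that by simp
  have pm: "pmult k V E f p i j = pmult k V E g p i j" if "i < n0" "j < n0" for i j
    unfolding pmult_def using pb pbp that by (simp add: less_imp_diff_less)
  have pmi: "pmult_inf k V E f p i = pmult_inf k V E g p i" if "i < n0" for i
    unfolding pmult_inf_def n using pb pbp that n0_def[symmetric] by simp
  show ?thesis
    unfolding pers_diagram_def n c n0_def[symmetric]
    apply (rule ext)
    apply (clarsimp)
    apply (intro arg_cong2[where f=plus] sum.cong refl)
     apply (simp add: pm)
    apply (simp add: pmi)
    done
qed

definition fq :: "nat set \<Rightarrow> real" where
  "fq \<sigma> = (if \<sigma> = {2} then 0 else if \<sigma> = {4} then 1 else if \<sigma> = {3} \<or> \<sigma> = {2,3} then 3/2 else 2)"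
definition gq :: "nat set \<Rightarrow> real" where
  "gq \<sigma> = (if \<sigma> = {2} then 0 else if \<sigma> = {4} then 1 else if \<sigma> = {3} \<or> \<sigma> = {3,4} then 3/2 else 2)"

lemma dmf_fq: "dmf VV EE fq"
  unfolding dmf_def S0 card_S0 critical_def
  by (simp add: S0_def setfacts fq_def)

lemma dmf_gq: "dmf VV EE gq"
  unfolding dmf_def S0 card_S0 critical_def
  by (simp add: S0_def setfacts gq_def)

lemma crit_fq_set: "{\<sigma> \<in> simplices VV EE. critical VV EE fq \<sigma>} = {{2},{4},{3,4}}"
proof -
  have c: "critical VV EE fq {2}" "\<not> critical VV EE fq {3}"
    "critical VV EE fq {4}" "\<not> critical VV EE fq {2,3}"
    "critical VV EE fq {3,4}"
    unfolding critical_def S0 by (simp_all add: S0_def setfacts fq_def)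
  show ?thesis unfolding S0 unfolding S0_def filt_insert by (simp add: c setfacts insert_commute)
qed

lemma crit_gq_set: "{\<sigma> \<in> simplices VV EE. critical VV EE gq \<sigma>} = {{2},{4},{2,3}}"
proof -
  have c: "critical VV EE gq {2}" "\<not> critical VV EE gq {3}"
    "critical VV EE gq {4}" "critical VV EE gq {2,3}"
    "\<not> critical VV EE gq {3,4}"
    unfolding critical_def S0 by (simp_all add: S0_def setfacts gq_def)
  show ?thesis unfolding S0 unfolding S0_def filt_insert by (simp add: c setfacts insert_commute)
qed

lemma crit_fq: "crit_values VV EE fq = {0,1,2}"
  unfolding cv_eq crit_fq_set by (simp add: fq_def setfacts insert_commute)

lemma crit_gq: "crit_values VV EE gq = {0,1,2}"
  unfolding cv_eq crit_gq_set by (simp add: gq_def setfacts insert_commute)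

lemma fq_gq_lev: "\<forall>\<sigma>\<in>S0. \<forall>c\<in>{0::real,1,2}. fq \<sigma> \<le> c \<longleftrightarrow> gq \<sigma> \<le> c"
  by (simp add: S0_def setfacts fq_def gq_def)

lemma pers_fqgq: "persistence_equiv TYPE('k::field) VV EE fq gq"
  unfolding persistence_equiv_def
proof
  fix p
  show "pers_diagram TYPE('k) VV EE fq p = pers_diagram TYPE('k) VV EE gq p"
  proof (rule pers_cong)
    show "crit_values VV EE fq = crit_values VV EE gq" by (simp add: crit_fq crit_gq)
    show "\<forall>i<ncrit VV EE fq. level VV EE fq i = level VV EE gq i"
    proof (intro allI impI)
      fix i assume i: "i < ncrit VV EE fq"
      have cvi: "cval VV EE fq i \<in> {0,1,2}" "cval VV EE gq i = cval VV EE fq i"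
        using i unfolding ncrit_def cval_def crit_fq crit_gq sl012 by (auto simp: less_Suc_eq)
      show "level VV EE fq i = level VV EE gq i"
        unfolding level_def S0 cvi(2) using fq_gq_lev cvi(1) by blast
    qed
  qed
qed

lemma not_forman_fqgq: "\<not> forman_equiv VV EE fq gq"
proof
  assume "forman_equiv VV EE fq gq"
  moreover have "({3}, {2,3}) \<in> gradient_field VV EE fq"
    unfolding gradient_field_def S0 by (simp add: S0_def setfacts fq_def)
  moreover have "({3}, {2,3}) \<notin> gradient_field VV EE gq"
    unfolding gradient_field_def S0 by (simp add: S0_def setfacts gq_def)
  ultimately show False unfolding forman_equiv_def by simp
qed



lemma tree_ex: "is_tree VV EE"
proof -
  let ?R = "\<lambda>x y. {x, y} \<in> EE"
  have r: "?R 2 3" "?R 3 2" "?R 3 4" "?R 4 3" by (simp_all add: insert_commute)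
  have rr: "?R\<^sup>*\<^sup>* 2 3" "?R\<^sup>*\<^sup>* 3 2" "?R\<^sup>*\<^sup>* 3 4" "?R\<^sup>*\<^sup>* 4 3"
    by (rule r_into_rtranclp[where r="?R"], rule r)+
  have to3: "?R\<^sup>*\<^sup>* u 3" if "u \<in> VV" for u
  proof -
    have "u = 2 \<or> u = 3 \<or> u = 4" using that by simp
    then show ?thesis
      by (elim disjE) (simp_all only: rr rtranclp.rtrancl_refl)
  qed
  have from3: "?R\<^sup>*\<^sup>* 3 u" if "u \<in> VV" for u
  proof -
    have "u = 2 \<or> u = 3 \<or> u = 4" using that by simp
    then show ?thesis
      by (elim disjE) (simp_all only: rr rtranclp.rtrancl_refl)
  qed
  have conn: "graph_connected VV EE"
    unfolding graph_connected_def
  proof (intro conjI ballI)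
    show "VV \<noteq> {}" by simp
    fix u w assume "u \<in> VV" "w \<in> VV"
    then show "?R\<^sup>*\<^sup>* u w" by (rule rtranclp_trans[OF to3 from3])
  qed
  have sg: "simple_graph VV EE" unfolding simple_graph_def by simp
  have d1: "\<not> graph_connected VV (EE - {{2,3}})"
  proof
    assume "graph_connected VV (EE - {{2,3}})"
    then have "(\<lambda>x y. {x, y} \<in> EE - {{2,3}})\<^sup>*\<^sup>* 2 3" unfolding graph_connected_def by simp
    note reach = this
    have inv: "(\<lambda>x y. {x, y} \<in> EE - {{2,3}})\<^sup>*\<^sup>* a b \<Longrightarrow> a = 2 \<Longrightarrow> b = 2" for a b
    proof (induction rule: rtranclp_induct)
      case base then show ?case by simp
    next
      case (step y z)
      then have "y = 2" by simp
      with step(2) show ?case by (auto simp: doubleton_eq_iff)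
    qed
    show False using inv[OF reach refl] by simp
  qed
  have d2: "\<not> graph_connected VV (EE - {{3,4}})"
  proof
    assume "graph_connected VV (EE - {{3,4}})"
    then have "(\<lambda>x y. {x, y} \<in> EE - {{3,4}})\<^sup>*\<^sup>* 4 3" unfolding graph_connected_def by simp
    note reach = this
    have inv: "(\<lambda>x y. {x, y} \<in> EE - {{3,4}})\<^sup>*\<^sup>* a b \<Longrightarrow> a = 4 \<Longrightarrow> b = 4" for a b
    proof (induction rule: rtranclp_induct)
      case base then show ?case by simp
    next
      case (step y z)
      then have "y = 4" by simp
      with step(2) show ?case by (auto simp: doubleton_eq_iff)
    qed
    show False using inv[OF reach refl] by simp
  qed
  show ?thesis unfolding is_tree_def using sg conn d1 d2 by blast
qed

theorem mainTheorem9: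
  shows "\<exists>(V::nat set) (E::nat set set). is_tree V E \<and>
     (\<exists>f g. dmf V E f \<and> dmf V E g \<and>
        persistence_equiv TYPE('k::field) V E f g \<and> \<not> forman_equiv V E f g) \<and>
     (\<exists>f' g'. dmf V E f' \<and> dmf V E g' \<and>
        forman_equiv V E f' g' \<and> \<not> persistence_equiv TYPE('k::field) V E f' g')"
  apply (rule exI[of _ VV], rule exI[of _ EE])
  apply (intro conjI tree_ex)
   apply (rule exI[of _ fq], rule exI[of _ gq])
   apply (intro conjI dmf_fq dmf_gq pers_fqgq not_forman_fqgq)
  apply (rule exI[of _ fp], rule exI[of _ gp])
  apply (intro conjI dmf_fp dmf_gp forman_fpgp not_pers_fpgp)
  done

end
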